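(* Let $\mathbb{D}=\{z\in\mathbb{C}:|z|<1\}$ and let $f=h+\overline{g}$ be a sense-preserving univalent harmonic mapping of $\mathbb{D}$ with $h(z)=z+\sum_{n=2}^\infty a_nz^n$ and $g(z)=\sum_{n=2}^\infty b_nz^n$ (so $f\in\mathcal{S}^0_H$), which is stable convex, i.e. $h+\mu\overline{g}$ is univalent and convex in $\mathbb{D}$ for every $|\mu|=1$. Let $m,q\in\mathbb{N}$, $\omega_m\in\mathcal{B}_m$ and $\omega_q\in\mathcal{B}_q$. Then for $s,p\in\mathbb{N}$, $$|Df(\omega_m(z))|^s+|f(\omega_q(z))|^p\le1\quad\text{and}\quad|\mathscr{D}f(\omega_m(z))|^s+|f(\omega_q(z))|^p\le1$$ for $|z|=r\le r_{4,s,m,p,q}$, where $r_{4,s,m,p,q}$ is the unique root in $(0,1)$ of $$\frac{r^{sm}}{(1-r^m)^{2s}}+\left(\frac{r^q}{1-r^q}\right)^p-1=0.$$ The radius $r_{4,s,m,p,q}$ is best possible.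
   Context: For $n\in\mathbb{N}$, $\mathcal{B}_n$ denotes the set of analytic functions $\omega:\mathbb{D}\to\mathbb{C}$ with $|\omega(z)|\le1$ in $\mathbb{D}$, $\omega(0)=\omega'(0)=\cdots=\omega^{(n-1)}(0)=0$ and $\omega^{(n)}(0)\neq0$. For a harmonic $f$, $Df=zf_z-\overline{z}f_{\overline{z}}$ and $\mathscr{D}f=zf_z+\overline{z}f_{\overline{z}}$, and $Df(\omega_m(z))$ means $(Df)(\omega_m(z))$ (similarly for $\mathscr{D}$). "Best possible" means that for every $r>r_{4,s,m,p,q}$ there exist such $f,\omega_m,\omega_q$ and $z$ with $|z|=r$ for which the inequality fails. *)

theory Defs
  imports "HOL-Analysis.Analysis"
begin

definition harm :: "(complex \<Rightarrow> complex) \<Rightarrow> (complex \<Rightarrow> complex) \<Rightarrow> complex \<Rightarrow> complex" where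
  "harm h g z = h z + cnj (g z)"

definition S0H :: "(complex \<Rightarrow> complex) \<Rightarrow> (complex \<Rightarrow> complex) \<Rightarrow> bool" where
  "S0H h g \<longleftrightarrow> h holomorphic_on ball 0 1 \<and> g holomorphic_on ball 0 1 \<and>
     h 0 = 0 \<and> deriv h 0 = 1 \<and> g 0 = 0 \<and> deriv g 0 = 0 \<and>
     (\<forall>z\<in>ball 0 1. norm (deriv g z) < norm (deriv h z)) \<and>
     inj_on (harm h g) (ball 0 1)"

definition stable_convex :: "(complex \<Rightarrow> complex) \<Rightarrow> (complex \<Rightarrow> complex) \<Rightarrow> bool" where
  "stable_convex h g \<longleftrightarrow> (\<forall>\<mu>. norm \<mu> = 1 \<longrightarrow>
     inj_on (\<lambda>z. h z + \<mu> * cnj (g z)) (ball 0 1) \<and>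
     convex ((\<lambda>z. h z + \<mu> * cnj (g z)) ` ball 0 1))"

definition Bcls :: "nat \<Rightarrow> (complex \<Rightarrow> complex) \<Rightarrow> bool" where
  "Bcls n \<omega> \<longleftrightarrow> \<omega> holomorphic_on ball 0 1 \<and> (\<forall>z\<in>ball 0 1. norm (\<omega> z) \<le> 1) \<and>
     (\<forall>k<n. (deriv ^^ k) \<omega> 0 = 0) \<and> (deriv ^^ n) \<omega> 0 \<noteq> 0"

text \<open>Df = z f_z - conj z f_{conj z} and script-D f = z f_z + conj z f_{conj z};
  for f = h + conj g: f_z = h', f_{conj z} = conj g'.\<close>
definition Dop :: "(complex \<Rightarrow> complex) \<Rightarrow> (complex \<Rightarrow> complex) \<Rightarrow> complex \<Rightarrow> complex" where
  "Dop h g z = z * deriv h z - cnj z * cnj (deriv g z)"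

definition Dscr :: "(complex \<Rightarrow> complex) \<Rightarrow> (complex \<Rightarrow> complex) \<Rightarrow> complex \<Rightarrow> complex" where
  "Dscr h g z = z * deriv h z + cnj z * cnj (deriv g z)"

definition F4 :: "nat \<Rightarrow> nat \<Rightarrow> nat \<Rightarrow> nat \<Rightarrow> real \<Rightarrow> real" where
  "F4 s m p q r = (r ^ (s * m)) / ((1 - r ^ m) ^ (2 * s)) + (r ^ q / (1 - r ^ q)) ^ p - 1"

definition r4 :: "nat \<Rightarrow> nat \<Rightarrow> nat \<Rightarrow> nat \<Rightarrow> real" where
  "r4 s m p q = (THE r. 0 < r \<and> r < 1 \<and> F4 s m p q r = 0)"

end

theory Submission
  imports "HOL-Complex_Analysis.Complex_Analysis" Defs
begin


lemma schwarz_gen: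
  fixes \<psi> :: "complex \<Rightarrow> complex"
  assumes hol: "\<psi> holomorphic_on ball 0 1"
    and bd: "\<And>w. w \<in> ball 0 1 \<Longrightarrow> norm (w^n * \<psi> w) \<le> 1"
    and w: "w \<in> ball 0 1"
  shows "norm (\<psi> w) \<le> 1"
proof -
  have le: "norm (\<psi> w) \<le> 1 / \<rho>^n" if r: "norm w < \<rho>" "\<rho> < 1" for \<rho>
  proof (rule maximum_modulus_frontier[of \<psi> "cball 0 \<rho>"])
    have "cball 0 \<rho> \<subseteq> ball (0::complex) 1" using r by auto
    then have "ball 0 \<rho> \<subseteq> ball (0::complex) 1" by auto
    then show "\<psi> holomorphic_on interior (cball 0 \<rho>)"
      using hol holomorphic_on_subset by auto
    show "continuous_on (closure (cball 0 \<rho>)) \<psi>"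
      using hol \<open>cball 0 \<rho> \<subseteq> ball 0 1\<close> holomorphic_on_subset holomorphic_on_imp_continuous_on by auto
    show "bounded (cball (0::complex) \<rho>)" by simp
    show "w \<in> cball 0 \<rho>" using r by auto
    fix z :: complex assume "z \<in> frontier (cball 0 \<rho>)"
    then have z: "norm z = \<rho>" using r
      by (metis dist_0_norm frontier_cball le_less_trans mem_sphere norm_ge_zero)
    then have "z \<in> ball 0 1" using r by auto
    from bd[OF this] have "\<rho>^n * norm (\<psi> z) \<le> 1" by (simp add: norm_mult norm_power z)
    moreover have "\<rho>^n > 0" using r norm_ge_zero[of w] by (intro zero_less_power) linarith
    ultimately show "norm (\<psi> z) \<le> 1 / \<rho>^n" by (simp add: field_simps)
  qed
  have "((\<lambda>\<rho>::real. 1 / \<rho>^n) \<longlongrightarrow> 1 / 1^n) (at_left 1)"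
    by (intro tendsto_intros) auto
  then have lim: "((\<lambda>\<rho>::real. 1 / \<rho>^n) \<longlongrightarrow> 1) (at_left 1)" by simp
  have ev: "eventually (\<lambda>\<rho>. norm w < \<rho> \<and> \<rho> < 1) (at_left (1::real))"
    using w by (intro eventually_at_leftI[of "norm w"]) auto
  show ?thesis
    by (rule tendsto_le[OF _ lim tendsto_const]) (auto intro: eventually_mono[OF ev] le)
qed




lemma factor_zero_ball:
  fixes f :: "complex \<Rightarrow> complex"
  assumes holf: "f holomorphic_on ball 0 1" and dfz: "\<And>i. i < n \<Longrightarrow> (deriv ^^ i) f 0 = 0"
  obtains \<psi> where "\<psi> holomorphic_on ball 0 1" "\<And>w. w \<in> ball 0 1 \<Longrightarrow> f w = w^n * \<psi> w"
    "\<psi> 0 = (deriv ^^ n) f 0 / fact n"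
proof -
  define \<psi> where "\<psi> w = suminf (\<lambda>i. (deriv ^^ (i + n)) f 0 / fact (i + n) * w^i)" for w
  have sumsg: "(\<lambda>i. (deriv ^^ (i + n)) f 0 / fact (i+n) * w^i) sums \<psi> w"
   and feq: "f w = w^n * \<psi> w" if w: "w \<in> ball 0 1" for w
  proof -
    define powf where "powf = (\<lambda>i. (deriv ^^ i) f 0/(fact i) * (w - 0)^i)"
    have "powf sums f w"
      unfolding powf_def by (rule holomorphic_power_series [OF holf w])
    moreover have "(\<Sum>i<n. powf i) = 0"
      by (simp add: powf_def dfz)
    ultimately have fsums: "(\<lambda>i. powf (i+n)) sums (f w)"
      using sums_iff_shift' by (metis diff_zero)
    then have *: "summable (\<lambda>i. w ^ n * ((deriv ^^ (i + n)) f 0 * w ^ i / fact (i + n)))"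
      unfolding powf_def using sums_summable
      by (auto simp: power_add mult_ac)
    have "summable (\<lambda>i. (deriv ^^ (i + n)) f 0 * w ^ i / fact (i + n))"
    proof (cases "w=0")
      case False then show ?thesis
        using summable_mult [OF *, of "1 / w ^ n"] by simp
    next
      case True then show ?thesis
        by (auto simp: Power.semiring_1_class.power_0_left intro!: summable_finite [of "{0}"]
                 split: if_split_asm)
    qed
    then show sumsg: "(\<lambda>i. (deriv ^^ (i + n)) f 0 / (fact(i + n)) * w^i) sums \<psi> w"
      by (simp add: summable_sums_iff \<psi>_def)
    show "f w = w^n * \<psi> w"
      using sums_mult [OF sumsg, of "w ^ n"]
      by (intro sums_unique2 [OF fsums]) (auto simp: power_add mult_ac powf_def)
  qed
  have "\<psi> holomorphic_on ball 0 1"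
    by (rule power_series_holomorphic[where a="\<lambda>i. (deriv ^^ (i + n)) f 0 / fact (i+n)"])
       (use sumsg in simp)
  moreover have "\<psi> 0 = (deriv ^^ n) f 0 / fact n"
    unfolding \<psi>_def by (subst suminf_finite [of "{0}"]) auto
  ultimately show ?thesis using that feq by blast
qed

lemma higher_deriv_sum:
  fixes f :: "'i \<Rightarrow> complex \<Rightarrow> complex"
  assumes "finite I" "\<And>i. i \<in> I \<Longrightarrow> f i holomorphic_on S" "open S" "z \<in> S"
  shows "(deriv ^^ j) (\<lambda>w. \<Sum>i\<in>I. f i w) z = (\<Sum>i\<in>I. (deriv ^^ j) (f i) z)"
  using assms(1,2)
proof (induction I rule: finite_induct)
  case empty
  then show ?case by simp
next
  case (insert x F)
  have "(deriv ^^ j) (\<lambda>w. \<Sum>i\<in>insert x F. f i w) z = (deriv ^^ j) (\<lambda>w. f x w + (\<Sum>i\<in>F. f i w)) z"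
    using insert by simp
  also have "\<dots> = (deriv ^^ j) (f x) z + (deriv ^^ j) (\<lambda>w. \<Sum>i\<in>F. f i w) z"
    using insert assms(3,4)
    by (intro higher_deriv_add[where S=S]) (auto intro!: holomorphic_on_sum)
  also have "\<dots> = (\<Sum>i\<in>insert x F. (deriv ^^ j) (f i) z)"
    using insert by simp
  finally show ?case .
qed




lemma root_unity_ne:
  fixes n j :: nat
  assumes "0 < j" "j < n"
  shows "exp (2 * of_real pi * \<i> / of_nat n) ^ j \<noteq> 1"
proof
  assume "exp (2 * of_real pi * \<i> / of_nat n) ^ j = 1"
  then have "exp (of_nat j * (2 * of_real pi * \<i> / of_nat n)) = 1"
    by (metis exp_of_nat_mult)
  then obtain k :: int where k: "Im (of_nat j * (2 * of_real pi * \<i> / of_nat n)) = of_int (2 * k) * pi"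
    by (auto simp: exp_eq_1)
  have "Im (of_nat j * (2 * of_real pi * \<i> / of_nat n)) = 2 * pi * real j / real n"
    using assms by (simp add: Im_divide power2_eq_square)
  with k have "2 * pi * real j / real n = 2 * pi * of_int k" by (simp add: algebra_simps)
  then have "(2 * pi) * (real j / real n) = (2 * pi) * of_int k" by simp
  then have "real j / real n = of_int k" using pi_gt_zero by (metis mult_cancel_left mult_eq_0_iff pi_neq_zero zero_neq_numeral)
  then have "real j = of_int k * real n" using assms by (simp add: field_simps)
  then have jk: "int j = k * int n"
    by (metis of_int_eq_iff of_int_mult of_int_of_nat_eq)
  have "0 < k * int n" using jk assms by linarith
  then have "k > 0" using assms by (simp add: zero_less_mult_iff)
  then have "int n \<le> k * int n" using mult_right_mono[of 1 k "int n"] by simp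
  with jk assms show False by simp
qed

lemma convex_coeff:
  fixes F :: "complex \<Rightarrow> complex"
  assumes holF: "F holomorphic_on ball 0 1" and F0: "F 0 = 0" and dF0: "deriv F 0 = 1"
    and inj: "inj_on F (ball 0 1)" and cvx: "convex (F ` ball 0 1)" and n: "n \<ge> 1"
  shows "norm ((deriv ^^ n) F 0) \<le> fact n"
proof -
  define \<Omega> where "\<Omega> = F ` ball 0 1"
  obtain Fi where Fihol: "Fi holomorphic_on \<Omega>"
    and Fid: "\<And>z. z \<in> ball 0 1 \<Longrightarrow> deriv F z * deriv Fi (F z) = 1"
    and Fiinv: "\<And>z. z \<in> ball 0 1 \<Longrightarrow> Fi (F z) = z"
    using holomorphic_has_inverse[OF holF _ inj] \<Omega>_def by auto
  have open\<Omega>: "open \<Omega>" unfolding \<Omega>_def by (rule open_mapping_thm3[OF holF _ inj]) auto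
  have z\<Omega>: "0 \<in> \<Omega>" using F0 \<Omega>_def by (metis centre_in_ball image_eqI zero_less_one)
  have Fi0: "Fi 0 = 0" using Fiinv[of 0] F0 by simp
  have dFi0: "deriv Fi 0 = 1" using Fid[of 0] F0 dF0 by simp
  have "Fi field_differentiable at 0"
    using holomorphic_on_imp_differentiable_at[OF Fihol open\<Omega> z\<Omega>] .
  then have DFi: "(Fi has_field_derivative 1) (at 0)"
    using dFi0 DERIV_deriv_iff_field_differentiable by metis
  define k where "k v = (if v = 0 then 1 else Fi v / v)" for v
  have "((\<lambda>y. (Fi y - Fi 0) / (y - 0)) \<longlongrightarrow> 1) (at 0)"
    using DFi by (simp add: has_field_derivative_iff)
  then have "(k \<longlongrightarrow> 1) (at 0)"
    by (rule Lim_transform_within[where d=1]) (auto simp: k_def Fi0)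
  then have klim: "(k \<longlongrightarrow> k 0) (at 0 within \<Omega>)"
    by (auto simp: k_def intro: tendsto_mono[OF at_le])
  have "(\<lambda>v. Fi v / v) holomorphic_on (\<Omega> - {0})"
    by (intro holomorphic_intros holomorphic_on_subset[OF Fihol]) auto
  then have kholD: "k holomorphic_on (\<Omega> - {0})"
    by (rule holomorphic_transform) (auto simp: k_def)
  have khol: "k holomorphic_on \<Omega>"
  proof (rule no_isolated_singularity'[where K="{0}" and f=k and S=\<Omega>])
    fix z assume "z \<in> {0::complex}"
    then show "(k \<longlongrightarrow> k z) (at z within \<Omega>)" using klim by simp
  qed (use kholD open\<Omega> in auto)
  have Fik: "\<And>v. v \<in> \<Omega> \<Longrightarrow> Fi v = v * k v" by (auto simp: k_def Fi0)
  define \<epsilon> where "\<epsilon> = exp (2 * of_real pi * \<i> / of_nat n)"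
  have n\<epsilon>: "norm \<epsilon> = 1" unfolding \<epsilon>_def by (simp add: norm_exp_eq_Re Re_divide)
  have \<epsilon>n: "\<epsilon> ^ n = 1"
  proof -
    have eq: "of_nat n * (2 * of_real pi * \<i> / of_nat n) = 2 * of_real pi * (\<i>::complex)" using n by simp
    have "\<epsilon> ^ n = exp (of_nat n * (2 * of_real pi * \<i> / of_nat n))"
      unfolding \<epsilon>_def by (metis exp_of_nat_mult)
    then show ?thesis by (simp only: eq exp_two_pi_i)
  qed
  have \<epsilon>j: "\<epsilon> ^ j \<noteq> 1" if "0 < j" "j < n" for j
    unfolding \<epsilon>_def using root_unity_ne[OF that] .
  define A where "A w = inverse (of_nat n) * (\<Sum>k<n. F (\<epsilon>^k * w))" for w
  have inball: "\<epsilon>^k * w \<in> ball 0 1" if "w \<in> ball 0 1" for k w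
    using that by (simp add: norm_mult norm_power n\<epsilon>)
  have hk: "(\<lambda>w. F (\<epsilon>^k * w)) holomorphic_on ball 0 1" for k
    by (rule holomorphic_on_compose_gen[of "\<lambda>w. \<epsilon>^k*w" "ball 0 1" F "ball 0 1", unfolded o_def])
       (auto intro!: holomorphic_intros holF inball)
  have Ahol: "A holomorphic_on ball 0 1"
    unfolding A_def by (intro holomorphic_intros holomorphic_on_sum hk)
  have A\<Omega>: "A w \<in> \<Omega>" if w: "w \<in> ball 0 1" for w
  proof -
    have cv: "convex \<Omega>" using cvx \<Omega>_def by simp
    have "(\<Sum>i<n. (1 / real n) *\<^sub>R F (\<epsilon>^i * w)) \<in> \<Omega>"
      by (rule convex_sum[OF finite_lessThan cv]) (use n w inball \<Omega>_def in auto)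
    moreover have "(\<Sum>i<n. (1 / real n) *\<^sub>R F (\<epsilon>^i * w)) = A w"
      unfolding A_def by (simp add: scaleR_conv_of_real sum_distrib_left divide_inverse)
    ultimately show ?thesis by simp
  qed
  have dA: "(deriv ^^ j) A 0 = inverse (of_nat n) * (\<Sum>k<n. (\<epsilon>^j)^k) * (deriv ^^ j) F 0" for j
  proof -
    have "(deriv ^^ j) A 0 = inverse (of_nat n) * (deriv ^^ j) (\<lambda>w. \<Sum>k<n. F (\<epsilon>^k * w)) 0"
      unfolding A_def
      by (rule higher_deriv_cmult[where A="ball 0 1"]) (auto intro!: holomorphic_on_sum hk)
    also have "(deriv ^^ j) (\<lambda>w. \<Sum>k<n. F (\<epsilon>^k * w)) 0 = (\<Sum>k<n. (deriv ^^ j) (\<lambda>w. F (\<epsilon>^k * w)) 0)"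
      by (rule higher_deriv_sum[where S="ball 0 1"]) (auto intro!: hk)
    also have "\<dots> = (\<Sum>k<n. (\<epsilon>^k)^j * (deriv ^^ j) F 0)"
      by (intro sum.cong refl, subst higher_deriv_compose_linear[where S="ball 0 1" and T="ball 0 1"])
         (auto intro: holF inball simp: norm_mult norm_power n\<epsilon>)
    also have "\<dots> = (\<Sum>k<n. (\<epsilon>^j)^k) * (deriv ^^ j) F 0"
      by (simp add: sum_distrib_right sum_distrib_left power_mult[symmetric] mult.commute)
    finally show ?thesis by simp
  qed
  have dAz: "(deriv ^^ j) A 0 = 0" if "j < n" for j
  proof (cases "j = 0")
    case True then show ?thesis using dA[of j] F0 by simp
  next
    case False
    have e1: "(\<epsilon>^j)^n = (\<epsilon>^n)^j" by (metis power_mult mult.commute)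
    have "(\<Sum>k<n. (\<epsilon>^j)^k) = ((\<epsilon>^j)^n - 1) / (\<epsilon>^j - 1)"
      using \<epsilon>j[of j] that False by (intro geometric_sum) auto
    then have "(\<Sum>k<n. (\<epsilon>^j)^k) = 0" using e1 \<epsilon>n by simp
    then show ?thesis using dA[of j] by simp
  qed
  have dAn: "(deriv ^^ n) A 0 = (deriv ^^ n) F 0"
    using dA[of n] n by (simp add: \<epsilon>n)
  obtain \<psi> where \<psi>hol: "\<psi> holomorphic_on ball 0 1" and Aeq: "\<And>w. w \<in> ball 0 1 \<Longrightarrow> A w = w^n * \<psi> w"
    and \<psi>0: "\<psi> 0 = (deriv ^^ n) A 0 / fact n"
    using factor_zero_ball[OF Ahol dAz] by blast
  define \<Psi> where "\<Psi> w = k (A w) * \<psi> w" for w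
  have "(\<lambda>w. k (A w)) holomorphic_on ball 0 1"
    by (rule holomorphic_on_compose_gen[of A "ball 0 1" k \<Omega>, unfolded o_def]) (use Ahol khol A\<Omega> in auto)
  then have \<Psi>hol: "\<Psi> holomorphic_on ball 0 1"
    unfolding \<Psi>_def by (intro holomorphic_intros \<psi>hol)
  have bd: "norm (w^n * \<Psi> w) \<le> 1" if w: "w \<in> ball 0 1" for w
  proof -
    have "w^n * \<Psi> w = A w * k (A w)" using Aeq[OF w] by (simp add: \<Psi>_def mult_ac)
    also have "\<dots> = Fi (A w)" using Fik[OF A\<Omega>[OF w]] by simp
    finally have eq: "w^n * \<Psi> w = Fi (A w)" .
    obtain z where z: "z \<in> ball 0 1" "A w = F z" using A\<Omega>[OF w] \<Omega>_def by auto
    then have "Fi (A w) = z" using Fiinv by simp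
    then show ?thesis using eq z by simp
  qed
  have "norm (\<Psi> 0) \<le> 1" by (rule schwarz_gen[OF \<Psi>hol bd]) auto
  moreover have "A 0 = 0" using Aeq[of 0] n by simp
  then have "\<Psi> 0 = (deriv ^^ n) F 0 / fact n" by (simp add: \<Psi>_def k_def \<psi>0 dAn)
  ultimately have "norm ((deriv ^^ n) F 0 / fact n) \<le> 1" by simp
  then show ?thesis by (simp add: norm_divide field_simps)
qed




lemma sums_norm_le:
  fixes f :: "nat \<Rightarrow> complex"
  assumes "f sums s" "g sums t" "\<And>n. norm (f n) \<le> g n"
  shows "norm s \<le> t"
proof -
  have sg: "summable g" using assms(2) by (rule sums_summable)
  have sn: "summable (\<lambda>n. norm (f n))"
    by (rule summable_comparison_test[OF _ sg]) (use assms(3) in auto)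
  have "norm s = norm (suminf f)" using assms(1) by (simp add: sums_iff)
  also have "\<dots> \<le> (\<Sum>n. norm (f n))" by (rule summable_norm[OF sn])
  also have "\<dots> \<le> suminf g" by (rule suminf_le[OF assms(3) sn sg])
  also have "\<dots> = t" using assms(2) by (simp add: sums_iff)
  finally show ?thesis .
qed

lemma convex_growth:
  fixes F :: "complex \<Rightarrow> complex"
  assumes holF: "F holomorphic_on ball 0 1" and F0: "F 0 = 0" and dF0: "deriv F 0 = 1"
    and inj: "inj_on F (ball 0 1)" and cvx: "convex (F ` ball 0 1)" and w: "w \<in> ball 0 1"
  shows "norm (F w) \<le> norm w / (1 - norm w)" "norm (deriv F w) \<le> 1 / (1 - norm w)^2"
proof -
  define \<rho> where "\<rho> = norm w"
  have \<rho>: "0 \<le> \<rho>" "\<rho> < 1" using w by (auto simp: \<rho>_def)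
  have cb: "norm ((deriv ^^ j) F 0) \<le> fact j" if "j \<ge> 1" for j
    by (rule convex_coeff[OF holF F0 dF0 inj cvx that])
  have s1: "(\<lambda>j. (deriv ^^ j) F 0 / fact j * (w - 0)^j) sums F w"
    by (rule holomorphic_power_series[OF holF w])
  then have s2: "(\<lambda>j. (deriv ^^ Suc j) F 0 / fact (Suc j) * w^(Suc j)) sums F w"
    using sums_Suc_iff[of "\<lambda>j. (deriv ^^ j) F 0 / fact j * w^j" "F w"] F0 by simp
  have g1: "(\<lambda>j. \<rho> * \<rho>^j) sums (\<rho> * (1 / (1 - \<rho>)))"
    by (rule sums_mult[OF geometric_sums]) (use \<rho> in simp)
  show "norm (F w) \<le> norm w / (1 - norm w)"
  proof -
    have "norm (F w) \<le> \<rho> * (1 / (1 - \<rho>))"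
    proof (rule sums_norm_le[OF s2 g1])
      fix j
      have "norm ((deriv ^^ Suc j) F 0 / fact (Suc j) * w^(Suc j))
            = norm ((deriv ^^ Suc j) F 0) / fact (Suc j) * \<rho>^(Suc j)"
        by (simp only: norm_mult norm_divide norm_power norm_fact \<rho>_def)
      also have "\<dots> \<le> 1 * \<rho>^(Suc j)"
        using cb[of "Suc j"] \<rho> by (intro mult_right_mono) (auto simp: divide_le_eq_1)
      finally show "norm ((deriv ^^ Suc j) F 0 / fact (Suc j) * w^(Suc j)) \<le> \<rho> * \<rho>^j" by simp
    qed
    then show ?thesis by (simp add: \<rho>_def)
  qed
  have holD: "deriv F holomorphic_on ball 0 1" by (rule holomorphic_deriv[OF holF]) auto
  have s3: "(\<lambda>j. (deriv ^^ j) (deriv F) 0 / fact j * (w - 0)^j) sums deriv F w"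
    by (rule holomorphic_power_series[OF holD w])
  have eqd: "(deriv ^^ j) (deriv F) 0 = (deriv ^^ Suc j) F 0" for j
    by (simp add: funpow_Suc_right del: funpow.simps)
  have s4: "(\<lambda>j. (deriv ^^ Suc j) F 0 / fact j * w^j) sums deriv F w"
    using s3 by (simp add: eqd)
  have g2: "(\<lambda>j. of_nat (Suc j) * \<rho>^j) sums (1 / (1 - \<rho>)^2)"
    by (rule geometric_deriv_sums) (use \<rho> in simp)
  show "norm (deriv F w) \<le> 1 / (1 - norm w)^2"
  proof -
    have "norm (deriv F w) \<le> 1 / (1 - \<rho>)^2"
    proof (rule sums_norm_le[OF s4 g2])
      fix j
      have "norm ((deriv ^^ Suc j) F 0 / fact j * w^j)
            = norm ((deriv ^^ Suc j) F 0) / fact j * \<rho>^j"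
        by (simp only: norm_mult norm_divide norm_power norm_fact \<rho>_def)
      also have "\<dots> \<le> fact (Suc j) / fact j * \<rho>^j"
        using cb[of "Suc j"] \<rho> by (intro mult_right_mono divide_right_mono) auto
      also have "fact (Suc j) / fact j = (of_nat (Suc j) :: real)"
        by (simp add: fact_Suc)
      finally show "norm ((deriv ^^ Suc j) F 0 / fact j * w^j) \<le> of_nat (Suc j) * \<rho>^j" by simp
    qed
    then show ?thesis by (simp add: \<rho>_def)
  qed
qed




lemma stable_to_analytic:
  fixes h g :: "complex \<Rightarrow> complex"
  assumes S: "S0H h g" and SC: "stable_convex h g" and \<nu>: "norm \<nu> = 1"
  shows "(\<lambda>z. h z + \<nu> * g z) holomorphic_on ball 0 1" (is "?F holomorphic_on _")
    and "h 0 + \<nu> * g 0 = 0"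
    and "deriv (\<lambda>z. h z + \<nu> * g z) 0 = 1"
    and "inj_on (\<lambda>z. h z + \<nu> * g z) (ball 0 1)"
    and "convex ((\<lambda>z. h z + \<nu> * g z) ` ball 0 1)"
proof -
  define F where "F = ?F"
  have holh: "h holomorphic_on ball 0 1" and holg: "g holomorphic_on ball 0 1"
    and h0: "h 0 = 0" and dh0: "deriv h 0 = 1" and g0: "g 0 = 0" and dg0: "deriv g 0 = 0"
    using S by (auto simp: S0H_def)
  have SCi: "inj_on (\<lambda>z. h z + \<mu> * cnj (g z)) (ball 0 1)"
    and SCc: "convex ((\<lambda>z. h z + \<mu> * cnj (g z)) ` ball 0 1)" if "norm \<mu> = 1" for \<mu>
    using SC that by (auto simp: stable_convex_def)
  show holF: "?F holomorphic_on ball 0 1" by (intro holomorphic_intros holh holg)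
  show "h 0 + \<nu> * g 0 = 0" using h0 g0 by simp
  have "h field_differentiable at 0" by (rule holomorphic_on_imp_differentiable_at[OF holh]) auto
  then have Dh: "(h has_field_derivative deriv h 0) (at 0)"
    by (simp add: DERIV_deriv_iff_field_differentiable)
  have "g field_differentiable at 0" by (rule holomorphic_on_imp_differentiable_at[OF holg]) auto
  then have Dg: "(g has_field_derivative deriv g 0) (at 0)"
    by (simp add: DERIV_deriv_iff_field_differentiable)
  have "(?F has_field_derivative (deriv h 0 + \<nu> * deriv g 0)) (at 0)"
    by (intro DERIV_add DERIV_cmult Dh Dg)
  then show "deriv ?F 0 = 1" using dh0 dg0 by (simp add: DERIV_imp_deriv)
  show injF: "inj_on ?F (ball 0 1)"
  proof (rule inj_onI)
    fix z1 z2 assume z: "z1 \<in> ball 0 1" "z2 \<in> ball 0 1" and eq: "?F z1 = ?F z2"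
    define a where "a = h z1 - h z2"
    define b where "b = g z1 - g z2"
    have ab: "a = - \<nu> * b" using eq by (simp add: a_def b_def algebra_simps)
    show "z1 = z2"
    proof (cases "b = 0")
      case True
      then have "a = 0" using ab by simp
      then have "h z1 + 1 * cnj (g z1) = h z2 + 1 * cnj (g z2)"
        using True by (simp add: a_def b_def)
      then show ?thesis using SCi[of 1] z by (auto dest: inj_onD)
    next
      case False
      define \<mu> where "\<mu> = \<nu> * b / cnj b"
      have n\<mu>: "norm \<mu> = 1" using False \<nu> by (simp add: \<mu>_def norm_mult norm_divide)
      have "\<mu> * cnj b = \<nu> * b" using False by (simp add: \<mu>_def)
      then have "a + \<mu> * cnj b = 0" using ab by simp
      then have "h z1 + \<mu> * cnj (g z1) = h z2 + \<mu> * cnj (g z2)"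
        by (simp add: a_def b_def algebra_simps)
      then show ?thesis using SCi[OF n\<mu>] z by (auto dest: inj_onD)
    qed
  qed
  have contF: "continuous_on (ball 0 1) ?F" using holF holomorphic_on_imp_continuous_on by blast
  show "convex (?F ` ball 0 1)"
    unfolding convex_alt
  proof (intro ballI allI impI)
    fix x y and u :: real
    assume x: "x \<in> ?F ` ball 0 1" and y: "y \<in> ?F ` ball 0 1" and u: "0 \<le> u \<and> u \<le> 1"
    obtain z1 where z1: "z1 \<in> ball 0 1" "x = ?F z1" using x by auto
    obtain z2 where z2: "z2 \<in> ball 0 1" "y = ?F z2" using y by auto
    define p where "p = (1 - u) *\<^sub>R x + u *\<^sub>R y"
    show "(1 - u) *\<^sub>R x + u *\<^sub>R y \<in> ?F ` ball 0 1"
    proof (cases "x = y")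
      case True
      then have "(1 - u) *\<^sub>R x + u *\<^sub>R y = x" by (simp add: algebra_simps)
      then show ?thesis using x by simp
    next
      case False
      define D where "D = y - x"
      have D0: "D \<noteq> 0" using False by (simp add: D_def)
      define d where "d = D / of_real (norm D)"
      have nd: "norm d = 1" using D0 by (simp add: d_def norm_divide)
      have dd: "cnj d * d = 1"
      proof -
        have "d * cnj d = of_real ((norm d)^2)" by (rule complex_norm_square[symmetric])
        then show ?thesis using nd by (simp add: mult.commute)
      qed
      have cdD: "cnj d * D = of_real (norm D)"
      proof -
        have "cnj d * D = cnj D * D / of_real (norm D)" by (simp add: d_def)
        also have "cnj D * D = of_real ((norm D)^2)" by (metis complex_norm_square mult.commute)
        finally show ?thesis using D0 by (simp add: power2_eq_square)
      qed
      define \<mu> where "\<mu> = - (d^2) * cnj \<nu>"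
      have n\<mu>: "norm \<mu> = 1" using nd \<nu> by (simp add: \<mu>_def norm_mult norm_power)
      define f\<mu> where "f\<mu> = (\<lambda>z. h z + \<mu> * cnj (g z))"
      have key: "Im (cnj d * f\<mu> z) = Im (cnj d * ?F z)" for z
      proof -
        have r1: "cnj d * (\<mu> * cnj (g z)) = - (cnj d * d) * (d * cnj (\<nu> * g z))"
          by (simp add: \<mu>_def power2_eq_square algebra_simps)
        have e1: "cnj d * f\<mu> z = cnj d * h z - d * cnj (\<nu> * g z)"
          using r1 dd by (simp add: f\<mu>_def distrib_left)
        have e2: "cnj d * ?F z = cnj d * h z + cnj (d * cnj (\<nu> * g z))"
          by (simp add: distrib_left mult_ac)
        have gen: "\<And>H X. Im (H - X) = Im (H + cnj X)" by simp
        show ?thesis unfolding e1 e2 by (rule gen)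
      qed
      define c where "c = Im (cnj d * x)"
      have cy: "Im (cnj d * y) = c"
      proof -
        have "cnj d * y = cnj d * x + of_real (norm D)" using cdD by (simp add: D_def algebra_simps)
        then show ?thesis by (simp add: c_def)
      qed
      have Ry: "Re (cnj d * y) = Re (cnj d * x) + norm D"
      proof -
        have "cnj d * y = cnj d * x + of_real (norm D)" using cdD by (simp add: D_def algebra_simps)
        then show ?thesis by simp
      qed
      have contf: "continuous_on (ball 0 1) f\<mu>"
        unfolding f\<mu>_def
        by (intro continuous_intros holomorphic_on_imp_continuous_on holh holg)
      obtain gi where hom: "homeomorphism (ball 0 1) (f\<mu> ` ball 0 1) f\<mu> gi"
        using invariance_of_domain_homeomorphism[OF open_ball contf _ SCi[OF n\<mu>, folded f\<mu>_def]] by auto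
      define L where "L = {v. Im (cnj d * v) = c}"
      have cL: "convex L"
        unfolding convex_alt L_def
        by (auto simp: scaleR_conv_of_real algebra_simps)
      have cO: "convex (f\<mu> ` ball 0 1)" using SCc[OF n\<mu>] by (simp add: f\<mu>_def)
      define T where "T = gi ` (f\<mu> ` ball 0 1 \<inter> L)"
      have connT: "connected T"
        unfolding T_def
      proof (rule connected_continuous_image)
        show "continuous_on (f\<mu> ` ball 0 1 \<inter> L) gi"
          using hom unfolding homeomorphism_def by (meson continuous_on_subset inf_le1)
        show "connected (f\<mu> ` ball 0 1 \<inter> L)" by (intro convex_connected convex_Int cO cL)
      qed
      have Tb: "T \<subseteq> ball 0 1" using hom unfolding homeomorphism_def T_def by auto
      have Tc: "Im (cnj d * ?F z) = c" if zt: "z \<in> T" for z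
      proof -
        obtain v where v: "v \<in> f\<mu> ` ball 0 1" "v \<in> L" "z = gi v" using zt T_def by auto
        then have "f\<mu> z = v" using hom unfolding homeomorphism_def by auto
        then show ?thesis using key[of z] v(2) L_def by simp
      qed
      have inT: "z \<in> T" if "z \<in> ball 0 1" "Im (cnj d * ?F z) = c" for z
      proof -
        have "f\<mu> z \<in> f\<mu> ` ball 0 1 \<inter> L" using that key[of z] by (auto simp: L_def)
        moreover have "gi (f\<mu> z) = z" using hom that unfolding homeomorphism_def by auto
        ultimately show ?thesis unfolding T_def by (metis image_eqI)
      qed
      have z1T: "z1 \<in> T" using inT[OF z1(1)] z1 c_def by simp
      have z2T: "z2 \<in> T" using inT[OF z2(1)] z2 cy by simp
      define R where "R = (\<lambda>z. Re (cnj d * ?F z)) ` T"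
      have connR: "connected R"
        unfolding R_def
        by (rule connected_continuous_image[OF _ connT])
           (intro continuous_intros continuous_on_subset[OF contF Tb])
      have a1: "Re (cnj d * x) \<in> R" using z1T z1 R_def by auto
      have a2: "Re (cnj d * y) \<in> R" using z2T z2 R_def by auto
      have pe: "cnj d * p = (1 - u) *\<^sub>R (cnj d * x) + u *\<^sub>R (cnj d * y)"
        by (simp add: p_def scaleR_conv_of_real algebra_simps)
      have Rp: "Re (cnj d * p) = (1 - u) * Re (cnj d * x) + u * Re (cnj d * y)"
        using pe by simp
      have Ip: "Im (cnj d * p) = c"
      proof -
        have "Im (cnj d * p) = (1 - u) * c + u * c" using pe cy c_def by simp
        then show ?thesis by (simp add: algebra_simps)
      qed
      have gen: "a \<le> P \<and> P \<le> b" if "P = (1-u)*a + u*b" "b = a + N" "0 \<le> N" for P a b N :: real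
      proof -
        have e: "P = a + u*N" using that by (simp add: algebra_simps)
        have "0 \<le> u*N" using u that(3) by simp
        moreover have "u*N \<le> N" using u that(3) by (simp add: mult_left_le_one_le)
        ultimately show ?thesis using e that(2) by linarith
      qed
      have "Re (cnj d * x) \<le> Re (cnj d * p)" "Re (cnj d * p) \<le> Re (cnj d * y)"
        using gen[OF Rp Ry norm_ge_zero] by auto
      then have "Re (cnj d * p) \<in> R"
        using connR a1 a2 unfolding connected_iff_interval by blast
      then obtain z where zT: "z \<in> T" and zR: "Re (cnj d * ?F z) = Re (cnj d * p)"
        unfolding R_def by auto
      have "cnj d * ?F z = cnj d * p"
        using zR Tc[OF zT] Ip by (simp add: complex_eq_iff)
      moreover have "cnj d \<noteq> 0" using nd by auto
      ultimately have "?F z = p" by simp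
      moreover have "z \<in> ball 0 1" using zT Tb by auto
      ultimately have "p \<in> ?F ` ball 0 1" by (intro image_eqI[where x=z]) auto
      then show ?thesis by (simp add: p_def)
    qed
  qed
qed




lemma Gmono: fixes x y :: real assumes "0 \<le> x" "x \<le> y" "y < 1"
  shows "x / (1 - x)^2 \<le> y / (1 - y)^2"
proof (rule frac_le)
  show "0 \<le> y" "x \<le> y" using assms by auto
  show "0 < (1 - y)^2" using assms by simp
  show "(1 - y)^2 \<le> (1 - x)^2" using assms by (intro power_mono) auto
qed

lemma Gsmono: fixes x y :: real assumes "0 \<le> x" "x < y" "y < 1"
  shows "x / (1 - x)^2 < y / (1 - y)^2"
proof (rule frac_less)
  show "0 \<le> x" "x < y" using assms by auto
  show "0 < (1 - y)^2" using assms by simp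
  show "(1 - y)^2 \<le> (1 - x)^2" using assms by (intro power_mono) auto
qed

lemma Hmono: fixes x y :: real assumes "0 \<le> x" "x \<le> y" "y < 1"
  shows "x / (1 - x) \<le> y / (1 - y)"
  by (rule frac_le) (use assms in auto)

lemma F4_alt:
  fixes r :: real
  shows "F4 s m p q r = (r^m / (1 - r^m)^2)^s + (r^q / (1 - r^q))^p - 1"
  by (simp add: F4_def power_divide power_mult[symmetric] mult.commute)

lemma F4_smono:
  fixes a b :: real
  assumes "s \<ge> 1" "m \<ge> 1" "0 \<le> a" "a < b" "b < 1"
  shows "F4 s m p q a < F4 s m p q b"
proof -
  have am: "a^m < b^m" using assms by (intro power_strict_mono) auto
  have bm: "b^m < 1" using assms by (simp add: power_less_one_iff)
  have a0: "0 \<le> a^m" using assms by simp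
  have "a^m / (1 - a^m)^2 < b^m / (1 - b^m)^2" using Gsmono[OF a0 am bm] .
  moreover have "0 \<le> a^m / (1 - a^m)^2" using a0 by simp
  ultimately have 1: "(a^m / (1 - a^m)^2)^s < (b^m / (1 - b^m)^2)^s"
    using assms by (intro power_strict_mono) auto
  have aq: "a^q \<le> b^q" using assms by (intro power_mono) auto
  have bq: "b^q < 1" if "q \<ge> 1" using assms that by (simp add: power_less_one_iff)
  have 2: "(a^q / (1 - a^q))^p \<le> (b^q / (1 - b^q))^p"
  proof (cases "q = 0")
    case True then show ?thesis by simp
  next
    case False
    then have "a^q / (1 - a^q) \<le> b^q / (1 - b^q)" using Hmono[OF _ aq bq] assms by simp
    moreover have "a^q < 1" using aq bq False by fastforce
    then have "0 \<le> a^q / (1 - a^q)" using assms by simp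
    ultimately show ?thesis by (intro power_mono) auto
  qed
  show ?thesis using 1 2 by (simp add: F4_alt)
qed

lemma F4_root:
  assumes "s \<ge> 1" "m \<ge> 1" "p \<ge> 1" "q \<ge> 1"
  shows "\<exists>!r. 0 < r \<and> r < 1 \<and> F4 s m p q r = 0"
proof -
  define r1 where "r1 = root m (1/2)"
  have r1: "0 < r1" "r1 < 1" "r1 ^ m = 1/2" using assms by (auto simp: r1_def real_root_gt_zero)
  have nz: "s*m \<noteq> 0" "m \<noteq> 0" "q \<noteq> 0" "p \<noteq> 0" using assms by auto
  have F0: "F4 s m p q 0 = -1" using nz by (simp add: F4_def power_0_left)
  have "F4 s m p q r1 = 2^s + (r1^q / (1 - r1^q))^p - 1"
  proof -
    have "r1^m / (1 - r1^m)^2 = (1/2) / (1 - 1/2)^2" by (simp only: r1(3))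
    also have "\<dots> = 2" by (simp add: power2_eq_square)
    finally have "r1^m / (1 - r1^m)^2 = 2" .
    then show ?thesis by (simp add: F4_alt)
  qed
  moreover have "(2::real)^s \<ge> 2" using assms
    by (metis le_add_diff_inverse power_increasing power_one_right one_le_numeral)
  moreover have "0 \<le> r1^q / (1 - r1^q)" using r1 assms by (simp add: power_le_one)
  ultimately have F1: "F4 s m p q r1 \<ge> 0"
    using zero_le_power[of "r1^q / (1 - r1^q)" p] by linarith
  have lt1: "x^k < 1" if "x \<in> {0..r1}" "k \<ge> 1" for x :: real and k
    using that r1 by (simp add: power_less_one_iff)
  have ltm: "x^m \<noteq> 1" "x^q \<noteq> 1" if "x \<in> {0..r1}" for x :: real
    using lt1[OF that, of m] lt1[OF that, of q] assms by auto
  have cont: "continuous_on {0..r1} (F4 s m p q)"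
    unfolding F4_def
    using ltm assms
    by (intro continuous_intros) (auto simp: power_eq_0_iff dest: less_imp_neq)
  obtain x where x: "0 \<le> x" "x \<le> r1" "F4 s m p q x = 0"
    using IVT'[of "F4 s m p q" 0 0 r1, OF _ F1 _ cont] F0 r1 by auto
  have "x \<noteq> 0" using x F0 by auto
  then have ex: "0 < x \<and> x < 1 \<and> F4 s m p q x = 0" using x r1 by auto
  show ?thesis
  proof (rule ex1I[of _ x])
    show "0 < x \<and> x < 1 \<and> F4 s m p q x = 0" by (rule ex)
    fix y assume y: "0 < y \<and> y < 1 \<and> F4 s m p q y = 0"
    show "y = x"
    proof (rule ccontr)
      assume "y \<noteq> x"
      then consider "y < x" | "x < y" by linarith
      then show False
      proof cases
        case 1 then show False using F4_smono[of s m y x p q] assms y ex by auto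
      next
        case 2 then show False using F4_smono[of s m x y p q] assms y ex by auto
      qed
    qed
  qed
qed




lemma h0_deriv:
  fixes x :: complex assumes "x \<noteq> 1"
  shows "((\<lambda>z. z / (1 - z)) has_field_derivative 1 / (1 - x)^2) (at x)"
proof -
  have "((\<lambda>z. z / (1 - z)) has_field_derivative (1 * (1 - x) - x * (0 - 1)) / ((1 - x) * (1 - x))) (at x)"
    by (rule DERIV_divide[OF DERIV_ident DERIV_diff[OF DERIV_const DERIV_ident]]) (use assms in auto)
  moreover have "(1 * (1 - x) - x * (0 - 1)) / ((1 - x) * (1 - x)) = 1 / (1 - x)^2"
    by (simp add: power2_eq_square)
  ultimately show ?thesis by simp
qed

lemma ball_ne1: "z \<in> ball (0::complex) 1 \<Longrightarrow> 1 - z \<noteq> 0" by auto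

lemma h0_inj: "inj_on (\<lambda>z::complex. z / (1 - z)) (ball 0 1)"
proof (rule inj_onI)
  fix z1 z2 :: complex assume z: "z1 \<in> ball 0 1" "z2 \<in> ball 0 1" "z1 / (1 - z1) = z2 / (1 - z2)"
  have "1 - z1 \<noteq> 0" "1 - z2 \<noteq> 0" using z by auto
  then have "z1 * (1 - z2) = z2 * (1 - z1)" using z(3) by (simp add: field_simps)
  then show "z1 = z2" by (simp add: algebra_simps)
qed

lemma S0H_ex: "S0H (\<lambda>z. z / (1 - z)) (\<lambda>z. 0)"
  unfolding S0H_def
proof (intro conjI ballI)
  show "(\<lambda>z. z / (1 - z)) holomorphic_on ball 0 1"
    by (intro holomorphic_intros) auto
  show "(\<lambda>z. 0::complex) holomorphic_on ball 0 1" by simp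
  show "0 / (1 - 0) = (0::complex)" by simp
  show "deriv (\<lambda>z. z / (1 - z)) 0 = (1::complex)"
    using DERIV_imp_deriv[OF h0_deriv[of 0]] by simp
  show "(0::complex) = 0" by simp
  show "deriv (\<lambda>z. 0) 0 = (0::complex)" by simp
  fix z :: complex assume z: "z \<in> ball 0 1"
  then have "1 - z \<noteq> 0" by auto
  then show "norm (deriv (\<lambda>z. 0::complex) z) < norm (deriv (\<lambda>z. z / (1 - z)) z)"
    using DERIV_imp_deriv[OF h0_deriv[of z]] by auto
next
  have "harm (\<lambda>z. z / (1 - z)) (\<lambda>z. 0) = (\<lambda>z. z / (1 - z))" by (auto simp: harm_def)
  then show "inj_on (harm (\<lambda>z. z / (1 - z)) (\<lambda>z. 0)) (ball 0 1)" using h0_inj by simp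
qed

lemma image_h0: "(\<lambda>z::complex. z / (1 - z)) ` ball 0 1 = {w. Re w > -1/2}"
proof
  show "(\<lambda>z::complex. z / (1 - z)) ` ball 0 1 \<subseteq> {w. Re w > -1/2}"
  proof
    fix w assume "w \<in> (\<lambda>z::complex. z / (1 - z)) ` ball 0 1"
    then obtain z where z: "norm z < 1" "w = z / (1 - z)" by auto
    define x where "x = Re z"
    define y where "y = Im z"
    have "(norm z)^2 < 1" using z(1) norm_ge_zero[of z] by (simp add: power_less_one_iff)
    then have "(Re z)^2 + (Im z)^2 < 1" by (metis cmod_power2)
    then have xy: "x*x + y*y < 1" by (simp add: x_def y_def power2_eq_square)
    have "x \<noteq> 1" using xy zero_le_square[of y] by auto
    then have "1 - x \<noteq> 0" by simp
    then have "(1 - x)*(1 - x) > 0" by (metis not_real_square_gt_zero)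
    then have D: "(1 - x)*(1 - x) + y*y > 0" using zero_le_square[of y] by linarith
    have "Re w = (x * (1 - x) + y * (- y)) / ((1 - x)*(1 - x) + y*y)"
      using z(2) by (simp add: Re_divide x_def y_def power2_eq_square)
    moreover have "(x * (1 - x) + y * (- y)) / ((1 - x)*(1 - x) + y*y) > -1/2"
      using D xy by (simp add: field_simps)
    ultimately show "w \<in> {w. Re w > -1/2}" by simp
  qed
  show "{w. Re w > -1/2} \<subseteq> (\<lambda>z::complex. z / (1 - z)) ` ball 0 1"
  proof
    fix w :: complex assume "w \<in> {w. Re w > -1/2}"
    then have w: "Re w > -1/2" by simp
    have w1: "1 + w \<noteq> 0" using w by (auto simp: complex_eq_iff)
    define a where "a = Re w"
    define b where "b = Im w"
    have e1: "(norm w)^2 = (Re w)^2 + (Im w)^2" by (rule cmod_power2)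
    have e2: "(norm (1 + w))^2 = (1 + Re w)^2 + (Im w)^2" by (simp add: cmod_power2)
    have ineq: "(Re w)^2 + (Im w)^2 < (1 + Re w)^2 + (Im w)^2"
      using w by (simp add: power2_eq_square algebra_simps)
    have "(norm w)^2 < (norm (1 + w))^2" unfolding e1 e2 by (rule ineq)
    then have nw: "norm w < norm (1 + w)" by (rule power2_less_imp_less) simp
    define z where "z = w / (1 + w)"
    have "norm z < 1" using nw w1 by (simp add: z_def norm_divide)
    moreover have "z / (1 - z) = w" using w1 by (simp add: z_def field_simps)
    ultimately show "w \<in> (\<lambda>z::complex. z / (1 - z)) ` ball 0 1" by force
  qed
qed

lemma stable_convex_ex: "stable_convex (\<lambda>z. z / (1 - z)) (\<lambda>z. 0)"
  unfolding stable_convex_def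
proof (intro allI impI conjI)
  fix \<mu> :: complex
  have e: "(\<lambda>z. z / (1 - z) + \<mu> * cnj 0) = (\<lambda>z::complex. z / (1 - z))" by simp
  show "inj_on (\<lambda>z. z / (1 - z) + \<mu> * cnj 0) (ball 0 1)" unfolding e by (rule h0_inj)
  show "convex ((\<lambda>z. z / (1 - z) + \<mu> * cnj 0) ` ball 0 1)"
    unfolding e image_h0 by (rule convex_halfspace_Re_gt)
qed

lemma Bcls_pow: assumes "n \<ge> 1" shows "Bcls n (\<lambda>z. z^n)"
  unfolding Bcls_def
proof (intro conjI ballI allI impI)
  show "(\<lambda>z. z ^ n) holomorphic_on ball 0 1" by (intro holomorphic_intros)
  fix z :: complex assume "z \<in> ball 0 1"
  then show "norm (z^n) \<le> 1" by (simp add: norm_power power_le_one)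
next
  have hd: "(deriv ^^ k) (\<lambda>w. w^n) 0 = pochhammer (of_nat (Suc n - k)) k * (0::complex)^(n-k)" for k
    using higher_deriv_power[of k 0 n 0] by simp
  fix k assume "k < n"
  then show "(deriv ^^ k) (\<lambda>z. z ^ n) 0 = (0::complex)" using hd[of k] by simp
next
  have hd: "(deriv ^^ k) (\<lambda>w. w^n) 0 = pochhammer (of_nat (Suc n - k)) k * (0::complex)^(n-k)" for k
    using higher_deriv_power[of k 0 n 0] by simp
  have "(deriv ^^ n) (\<lambda>w. w^n) (0::complex) = pochhammer 1 n" using hd[of n] by simp
  also have "\<dots> = fact n" by (simp add: pochhammer_fact)
  finally show "(deriv ^^ n) (\<lambda>z. z ^ n) 0 \<noteq> (0::complex)" by simp
qed




lemma align:
  fixes a b :: complex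
  shows "\<exists>\<nu>. norm \<nu> = 1 \<and> norm (a + \<nu> * b) = norm a + norm b"
proof -
  define sa where "sa = (if a = 0 then 1 else a / of_real (norm a))"
  define cb where "cb = (if b = 0 then 1 else cnj b / of_real (norm b))"
  have nsa: "norm sa = 1" by (simp add: sa_def norm_divide)
  have ncb: "norm cb = 1" by (simp add: cb_def norm_divide)
  have aeq: "a = sa * of_real (norm a)" by (simp add: sa_def)
  have beq: "cb * b = of_real (norm b)"
  proof (cases "b = 0")
    case False
    have "cnj b * b = of_real ((norm b)^2)" by (metis complex_norm_square mult.commute)
    then show ?thesis using False by (simp add: cb_def power2_eq_square)
  qed (simp add: cb_def)
  have "a + (sa * cb) * b = sa * of_real (norm a + norm b)"
    using aeq beq by (metis distrib_left mult.assoc of_real_add)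
  then have "norm (a + (sa * cb) * b) = norm sa * norm (complex_of_real (norm a + norm b))"
    by (simp only: norm_mult)
  also have "\<dots> = norm a + norm b" using nsa by (simp del: of_real_add)
  finally have "norm (a + (sa * cb) * b) = norm a + norm b" .
  moreover have "norm (sa * cb) = 1" using nsa ncb by (simp add: norm_mult)
  ultimately show ?thesis by blast
qed

lemma Bcls_bound:
  assumes B: "Bcls n \<omega>" and z: "z \<in> ball 0 1"
  shows "norm (\<omega> z) \<le> norm z ^ n"
proof -
  have hol: "\<omega> holomorphic_on ball 0 1" and bd: "\<And>w. w \<in> ball 0 1 \<Longrightarrow> norm (\<omega> w) \<le> 1"
    and dz: "\<And>k. k < n \<Longrightarrow> (deriv ^^ k) \<omega> 0 = 0"
    using B by (auto simp: Bcls_def)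
  obtain \<psi> where \<psi>hol: "\<psi> holomorphic_on ball 0 1" and eq: "\<And>w. w \<in> ball 0 1 \<Longrightarrow> \<omega> w = w^n * \<psi> w"
    using factor_zero_ball[OF hol dz] by blast
  have "norm (\<psi> z) \<le> 1"
    by (rule schwarz_gen[OF \<psi>hol _ z]) (use bd eq in force)
  then have "norm z ^ n * norm (\<psi> z) \<le> norm z ^ n * 1"
    by (intro mult_left_mono) auto
  then show ?thesis using eq[OF z] by (simp add: norm_mult norm_power)
qed

lemma harm_bounds:
  assumes S: "S0H h g" and SC: "stable_convex h g" and w: "w \<in> ball 0 1"
  shows "norm (harm h g w) \<le> norm w / (1 - norm w)"
    and "norm (Dop h g w) \<le> norm w / (1 - norm w)^2"
    and "norm (Dscr h g w) \<le> norm w / (1 - norm w)^2"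
proof -
  have holh: "h holomorphic_on ball 0 1" and holg: "g holomorphic_on ball 0 1"
    using S by (auto simp: S0H_def)
  note sta = stable_to_analytic[OF S SC]
  obtain \<nu> where n\<nu>: "norm \<nu> = 1" and e\<nu>: "norm (h w + \<nu> * g w) = norm (h w) + norm (g w)"
    using align by blast
  have "norm (h w + \<nu> * g w) \<le> norm w / (1 - norm w)"
    using convex_growth(1)[OF sta(1)[OF n\<nu>] sta(2)[OF n\<nu>] sta(3)[OF n\<nu>] sta(4)[OF n\<nu>] sta(5)[OF n\<nu>] w]
    by simp
  moreover have "norm (harm h g w) \<le> norm (h w) + norm (g w)"
    unfolding harm_def by (metis complex_mod_cnj norm_triangle_ineq)
  ultimately show "norm (harm h g w) \<le> norm w / (1 - norm w)" using e\<nu> by simp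
  obtain \<nu>' where n\<nu>': "norm \<nu>' = 1"
    and e\<nu>': "norm (deriv h w + \<nu>' * deriv g w) = norm (deriv h w) + norm (deriv g w)"
    using align by blast
  have "h field_differentiable at w" by (rule holomorphic_on_imp_differentiable_at[OF holh]) (use w in auto)
  then have Dh: "(h has_field_derivative deriv h w) (at w)"
    by (simp add: DERIV_deriv_iff_field_differentiable)
  have "g field_differentiable at w" by (rule holomorphic_on_imp_differentiable_at[OF holg]) (use w in auto)
  then have Dg: "(g has_field_derivative deriv g w) (at w)"
    by (simp add: DERIV_deriv_iff_field_differentiable)
  have "((\<lambda>z. h z + \<nu>' * g z) has_field_derivative (deriv h w + \<nu>' * deriv g w)) (at w)"
    by (intro DERIV_add DERIV_cmult Dh Dg)
  then have dF: "deriv (\<lambda>z. h z + \<nu>' * g z) w = deriv h w + \<nu>' * deriv g w"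
    by (rule DERIV_imp_deriv)
  have dbound: "norm (deriv h w) + norm (deriv g w) \<le> 1 / (1 - norm w)^2"
    using convex_growth(2)[OF sta(1)[OF n\<nu>'] sta(2)[OF n\<nu>'] sta(3)[OF n\<nu>'] sta(4)[OF n\<nu>'] sta(5)[OF n\<nu>'] w]
    dF e\<nu>' by simp
  have "norm (Dop h g w) \<le> norm w * norm (deriv h w) + norm w * norm (deriv g w)"
    unfolding Dop_def
    by (metis complex_mod_cnj norm_mult norm_triangle_ineq4)
  also have "\<dots> = norm w * (norm (deriv h w) + norm (deriv g w))" by (simp add: algebra_simps)
  also have "\<dots> \<le> norm w * (1 / (1 - norm w)^2)" by (intro mult_left_mono dbound) auto
  finally show "norm (Dop h g w) \<le> norm w / (1 - norm w)^2" by simp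
  have "norm (Dscr h g w) \<le> norm w * norm (deriv h w) + norm w * norm (deriv g w)"
    unfolding Dscr_def
    by (metis complex_mod_cnj norm_mult norm_triangle_ineq)
  also have "\<dots> = norm w * (norm (deriv h w) + norm (deriv g w))" by (simp add: algebra_simps)
  also have "\<dots> \<le> norm w * (1 / (1 - norm w)^2)" by (intro mult_left_mono dbound) auto
  finally show "norm (Dscr h g w) \<le> norm w / (1 - norm w)^2" by simp
qed

lemma ex_vals:
  fixes t :: real assumes t: "0 \<le> t" "t < 1"
  shows "Dop (\<lambda>z. z / (1 - z)) (\<lambda>z. 0) (of_real t) = of_real (t / (1 - t)^2)"
    and "Dscr (\<lambda>z. z / (1 - z)) (\<lambda>z. 0) (of_real t) = of_real (t / (1 - t)^2)"
    and "harm (\<lambda>z. z / (1 - z)) (\<lambda>z. 0) (of_real t) = of_real (t / (1 - t))"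
proof -
  have ne: "(of_real t :: complex) \<noteq> 1" using t by auto
  have d: "deriv (\<lambda>z. z / (1 - z)) (of_real t :: complex) = 1 / (1 - of_real t)^2"
    by (rule DERIV_imp_deriv[OF h0_deriv[OF ne]])
  show "Dop (\<lambda>z. z / (1 - z)) (\<lambda>z. 0) (of_real t) = of_real (t / (1 - t)^2)"
    unfolding Dop_def d by simp
  show "Dscr (\<lambda>z. z / (1 - z)) (\<lambda>z. 0) (of_real t) = of_real (t / (1 - t)^2)"
    unfolding Dscr_def d by simp
  show "harm (\<lambda>z. z / (1 - z)) (\<lambda>z. 0) (of_real t) = of_real (t / (1 - t))"
    unfolding harm_def by simp
qed

theorem theorem3p4:
  fixes s m p q :: nat
  assumes "s \<ge> 1" and "m \<ge> 1" and "p \<ge> 1" and "q \<ge> 1"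
  shows "(\<exists>!r. 0 < r \<and> r < 1 \<and> F4 s m p q r = 0)
    \<and> (\<forall>h g \<omega>m \<omega>q z. S0H h g \<and> stable_convex h g \<and> Bcls m \<omega>m \<and> Bcls q \<omega>q
          \<and> norm z \<le> r4 s m p q \<longrightarrow>
          norm (Dop h g (\<omega>m z)) ^ s + norm (harm h g (\<omega>q z)) ^ p \<le> 1 \<and>
          norm (Dscr h g (\<omega>m z)) ^ s + norm (harm h g (\<omega>q z)) ^ p \<le> 1)
    \<and> (\<forall>r. r4 s m p q < r \<and> r < 1 \<longrightarrow>
          (\<exists>h g \<omega>m \<omega>q z. S0H h g \<and> stable_convex h g \<and> Bcls m \<omega>m \<and> Bcls q \<omega>q
             \<and> norm z = r \<and>
             norm (Dop h g (\<omega>m z)) ^ s + norm (harm h g (\<omega>q z)) ^ p > 1)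
        \<and> (\<exists>h g \<omega>m \<omega>q z. S0H h g \<and> stable_convex h g \<and> Bcls m \<omega>m \<and> Bcls q \<omega>q
             \<and> norm z = r \<and>
             norm (Dscr h g (\<omega>m z)) ^ s + norm (harm h g (\<omega>q z)) ^ p > 1))"
proof -
  have EX1: "\<exists>!r. 0 < r \<and> r < 1 \<and> F4 s m p q r = 0" by (rule F4_root[OF assms])
  define \<rho> where "\<rho> = r4 s m p q"
  have \<rho>p: "0 < \<rho>" "\<rho> < 1" "F4 s m p q \<rho> = 0"
    using theI'[OF EX1] unfolding \<rho>_def r4_def by auto
  have \<rho>m: "\<rho>^m < 1" "\<rho>^q < 1" using \<rho>p assms by (auto simp: power_less_one_iff)
  have part2: "\<forall>h g \<omega>m \<omega>q z. S0H h g \<and> stable_convex h g \<and> Bcls m \<omega>m \<and> Bcls q \<omega>q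
          \<and> norm z \<le> r4 s m p q \<longrightarrow>
          norm (Dop h g (\<omega>m z)) ^ s + norm (harm h g (\<omega>q z)) ^ p \<le> 1 \<and>
          norm (Dscr h g (\<omega>m z)) ^ s + norm (harm h g (\<omega>q z)) ^ p \<le> 1"
  proof (intro allI impI)
    fix h g \<omega>m \<omega>q :: "complex \<Rightarrow> complex" and z :: complex
    assume H: "S0H h g \<and> stable_convex h g \<and> Bcls m \<omega>m \<and> Bcls q \<omega>q \<and> norm z \<le> r4 s m p q"
    then have S: "S0H h g" and SC: "stable_convex h g" and Bm: "Bcls m \<omega>m" and Bq: "Bcls q \<omega>q"
      and nz: "norm z \<le> \<rho>" by (auto simp: \<rho>_def)
    have z: "z \<in> ball 0 1" using nz \<rho>p by auto
    define w where "w = \<omega>m z"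
    define v where "v = \<omega>q z"
    have nw: "norm w \<le> \<rho>^m"
      using Bcls_bound[OF Bm z] power_mono[OF nz, of m] by (simp add: w_def)
    have nv: "norm v \<le> \<rho>^q"
      using Bcls_bound[OF Bq z] power_mono[OF nz, of q] by (simp add: v_def)
    have w: "w \<in> ball 0 1" using nw \<rho>m by auto
    have v: "v \<in> ball 0 1" using nv \<rho>m by auto
    have G: "norm w / (1 - norm w)^2 \<le> \<rho>^m / (1 - \<rho>^m)^2"
      by (rule Gmono[OF norm_ge_zero nw \<rho>m(1)])
    have Hb: "norm v / (1 - norm v) \<le> \<rho>^q / (1 - \<rho>^q)"
      by (rule Hmono[OF norm_ge_zero nv \<rho>m(2)])
    have b1: "norm (Dop h g w) ^ s \<le> (\<rho>^m / (1 - \<rho>^m)^2) ^ s"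
      using harm_bounds(2)[OF S SC w] G by (intro power_mono) auto
    have b2: "norm (Dscr h g w) ^ s \<le> (\<rho>^m / (1 - \<rho>^m)^2) ^ s"
      using harm_bounds(3)[OF S SC w] G by (intro power_mono) auto
    have b3: "norm (harm h g v) ^ p \<le> (\<rho>^q / (1 - \<rho>^q)) ^ p"
      using harm_bounds(1)[OF S SC v] Hb by (intro power_mono) auto
    have one: "(\<rho>^m / (1 - \<rho>^m)^2) ^ s + (\<rho>^q / (1 - \<rho>^q)) ^ p = 1"
      using \<rho>p(3) by (simp add: F4_alt)
    show "norm (Dop h g (\<omega>m z)) ^ s + norm (harm h g (\<omega>q z)) ^ p \<le> 1 \<and>
          norm (Dscr h g (\<omega>m z)) ^ s + norm (harm h g (\<omega>q z)) ^ p \<le> 1"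
      using b1 b2 b3 one by (simp add: w_def v_def)
  qed
  have part3: "\<forall>r. r4 s m p q < r \<and> r < 1 \<longrightarrow>
          (\<exists>h g \<omega>m \<omega>q z. S0H h g \<and> stable_convex h g \<and> Bcls m \<omega>m \<and> Bcls q \<omega>q
             \<and> norm z = r \<and>
             norm (Dop h g (\<omega>m z)) ^ s + norm (harm h g (\<omega>q z)) ^ p > 1)
        \<and> (\<exists>h g \<omega>m \<omega>q z. S0H h g \<and> stable_convex h g \<and> Bcls m \<omega>m \<and> Bcls q \<omega>q
             \<and> norm z = r \<and>
             norm (Dscr h g (\<omega>m z)) ^ s + norm (harm h g (\<omega>q z)) ^ p > 1)"
  proof (intro allI impI)
    fix r assume r: "r4 s m p q < r \<and> r < 1"
    then have r0: "\<rho> < r" "r < 1" by (auto simp: \<rho>_def)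
    have pos: "F4 s m p q r > 0"
      using F4_smono[of s m \<rho> r p q] assms \<rho>p r0 by auto
    have rpos: "0 \<le> r" using r0 \<rho>p by auto
    have rm: "0 \<le> r^m" "r^m < 1" "0 \<le> r^q" "r^q < 1"
      using rpos r0 assms by (auto simp: power_less_one_iff)
    define z :: complex where "z = of_real r"
    have zm: "z^m = of_real (r^m)" "z^q = of_real (r^q)" by (simp_all add: z_def)
    have nz: "norm z = r" using rpos by (simp add: z_def)
    have e1: "norm (Dop (\<lambda>z. z / (1 - z)) (\<lambda>z. 0) (z^m)) = r^m / (1 - r^m)^2"
    proof -
      have "Dop (\<lambda>z. z / (1 - z)) (\<lambda>z. 0) (z^m) = complex_of_real (r^m / (1 - r^m)^2)"
        unfolding zm by (rule ex_vals(1)[OF rm(1,2)])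
      then have "norm (Dop (\<lambda>z. z / (1 - z)) (\<lambda>z. 0) (z^m)) = abs (r^m / (1 - r^m)^2)"
        by (simp only: norm_of_real)
      then show ?thesis using rm by simp
    qed
    have e2: "norm (Dscr (\<lambda>z. z / (1 - z)) (\<lambda>z. 0) (z^m)) = r^m / (1 - r^m)^2"
    proof -
      have "Dscr (\<lambda>z. z / (1 - z)) (\<lambda>z. 0) (z^m) = complex_of_real (r^m / (1 - r^m)^2)"
        unfolding zm by (rule ex_vals(2)[OF rm(1,2)])
      then have "norm (Dscr (\<lambda>z. z / (1 - z)) (\<lambda>z. 0) (z^m)) = abs (r^m / (1 - r^m)^2)"
        by (simp only: norm_of_real)
      then show ?thesis using rm by simp
    qed
    have e3: "norm (harm (\<lambda>z. z / (1 - z)) (\<lambda>z. 0) (z^q)) = r^q / (1 - r^q)"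
    proof -
      have "harm (\<lambda>z. z / (1 - z)) (\<lambda>z. 0) (z^q) = complex_of_real (r^q / (1 - r^q))"
        unfolding zm by (rule ex_vals(3)[OF rm(3,4)])
      then have "norm (harm (\<lambda>z. z / (1 - z)) (\<lambda>z. 0) (z^q)) = abs (r^q / (1 - r^q))"
        by (simp only: norm_of_real)
      then show ?thesis using rm by simp
    qed
    have sum: "(r^m / (1 - r^m)^2) ^ s + (r^q / (1 - r^q)) ^ p > 1"
      using pos by (simp add: F4_alt)
    have Bm: "Bcls m (\<lambda>z. z^m)" and Bq: "Bcls q (\<lambda>z. z^q)" using Bcls_pow assms by auto
    show "(\<exists>h g \<omega>m \<omega>q z. S0H h g \<and> stable_convex h g \<and> Bcls m \<omega>m \<and> Bcls q \<omega>q
             \<and> norm z = r \<and>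
             norm (Dop h g (\<omega>m z)) ^ s + norm (harm h g (\<omega>q z)) ^ p > 1)
        \<and> (\<exists>h g \<omega>m \<omega>q z. S0H h g \<and> stable_convex h g \<and> Bcls m \<omega>m \<and> Bcls q \<omega>q
             \<and> norm z = r \<and>
             norm (Dscr h g (\<omega>m z)) ^ s + norm (harm h g (\<omega>q z)) ^ p > 1)"
    proof (intro conjI)
      show "\<exists>h g \<omega>m \<omega>q z. S0H h g \<and> stable_convex h g \<and> Bcls m \<omega>m \<and> Bcls q \<omega>q
             \<and> norm z = r \<and>
             norm (Dop h g (\<omega>m z)) ^ s + norm (harm h g (\<omega>q z)) ^ p > 1"
        by (rule exI[of _ "\<lambda>z. z / (1 - z)"], rule exI[of _ "\<lambda>z. 0"], rule exI[of _ "\<lambda>z. z^m"],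
            rule exI[of _ "\<lambda>z. z^q"], rule exI[of _ z])
           (use S0H_ex stable_convex_ex Bm Bq nz e1 e3 sum in auto)
      show "\<exists>h g \<omega>m \<omega>q z. S0H h g \<and> stable_convex h g \<and> Bcls m \<omega>m \<and> Bcls q \<omega>q
             \<and> norm z = r \<and>
             norm (Dscr h g (\<omega>m z)) ^ s + norm (harm h g (\<omega>q z)) ^ p > 1"
        by (rule exI[of _ "\<lambda>z. z / (1 - z)"], rule exI[of _ "\<lambda>z. 0"], rule exI[of _ "\<lambda>z. z^m"],
            rule exI[of _ "\<lambda>z. z^q"], rule exI[of _ z])
           (use S0H_ex stable_convex_ex Bm Bq nz e2 e3 sum in auto)
    qed
  qed
  show ?thesis using EX1 part2 part3 by blast
qed


end
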